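(* Let $y:A\to\Delta(B)$ be given (with $A=S$). Then: (a) $U^1(\mu_0,y)\ge U^1(\mu,y)$ for every $\mu\in\mathcal{M}$ if and only if $\sum_{s\in S}u^1(s,y(\cdot\mid s))\ge\sum_{s\in S}u^1(s,y(\cdot\mid\phi(s)))$ for every permutation $\phi$ of $S$. (b) $U^1(\mu_0,y)>U^1(\mu,y)$ for every $\mu\in\mathcal{M}$ with $\mu\neq\mu_0$ if and only if $\sum_{s\in S}u^1(s,y(\cdot\mid s))>\sum_{s\in S}u^1(s,y(\cdot\mid\phi(s)))$ for every permutation $\phi$ of $S$ other than the identity.
   Context: $S$ is a finite set, $A=S$, $B$ a finite set, $u^1:S\times B\to\mathbb{R}$, extended linearly to $u^1(s,\beta)=\sum_b\beta(b)u^1(s,b)$ for $\beta\in\Delta(B)$. $m\in\Delta(S)$ has full support (it is the invariant measure of an irreducible Markov chain on $S$). $\mathcal{M}\subset\Delta(S\times A)$ is the set of distributions on $S\times A$ both of whose marginals equal $m$; $\mu_0\in\mathcal{M}$ is given by $\mu_0(s,s)=m(s)$, $\mu_0(s,a)=0$ for $s\ne a$. For $\mu\in\mathcal{M}$, $U^1(\mu,y)=\sum_{s,a}\mu(s,a)u^1(s,y(\cdot\mid a))$. *)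

theory Defs
  imports "HOL-Analysis.Analysis" "HOL-Combinatorics.Permutations"
begin

definition is_distr :: "('x::finite \<Rightarrow> real) \<Rightarrow> bool" where
  "is_distr p \<longleftrightarrow> (\<forall>x. p x \<ge> 0) \<and> (\<Sum>x\<in>UNIV. p x) = 1"

definition u_ext :: "('s \<Rightarrow> 'b::finite \<Rightarrow> real) \<Rightarrow> 's \<Rightarrow> ('b \<Rightarrow> real) \<Rightarrow> real" where
  "u_ext u s \<beta> = (\<Sum>b\<in>UNIV. \<beta> b * u s b)"

definition couplings :: "('s::finite \<Rightarrow> real) \<Rightarrow> ('s \<times> 's \<Rightarrow> real) set" where
  "couplings m = {\<mu>. is_distr \<mu> \<and> (\<forall>s. (\<Sum>a\<in>UNIV. \<mu> (s, a)) = m s)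
                          \<and> (\<forall>a. (\<Sum>s\<in>UNIV. \<mu> (s, a)) = m a)}"

definition mu0 :: "('s \<Rightarrow> real) \<Rightarrow> ('s \<times> 's \<Rightarrow> real)" where
  "mu0 m = (\<lambda>(s, a). if s = a then m s else 0)"

definition U1 :: "('s \<Rightarrow> 'b::finite \<Rightarrow> real) \<Rightarrow> ('s::finite \<times> 's \<Rightarrow> real) \<Rightarrow> ('s \<Rightarrow> 'b \<Rightarrow> real) \<Rightarrow> real" where
  "U1 u \<mu> y = (\<Sum>(s, a)\<in>UNIV. \<mu> (s, a) * u_ext u s (y a))"

end

theory Submission imports Defs begin

definition Ep :: "('s \<Rightarrow> 's) \<Rightarrow> 's \<times> 's \<Rightarrow> real" where
  "Ep \<phi> = (\<lambda>(s,a). if s \<noteq> \<phi> s \<and> a = \<phi> s then 1 else 0)"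

definition circ :: "('s::finite \<times> 's \<Rightarrow> real) \<Rightarrow> bool" where
  "circ \<nu> \<longleftrightarrow> (\<forall>p. \<nu> p \<ge> 0) \<and> (\<forall>s. \<nu> (s,s) = 0) \<and>
     (\<forall>s. (\<Sum>a\<in>UNIV. \<nu> (s,a)) = (\<Sum>a\<in>UNIV. \<nu> (a,s)))"

definition tot :: "('s::finite \<Rightarrow> 's \<Rightarrow> real) \<Rightarrow> ('s \<times> 's \<Rightarrow> real) \<Rightarrow> real" where
  "tot c \<nu> = (\<Sum>(s,a)\<in>UNIV. \<nu> (s,a) * (c s a - c s s))"

definition G :: "('s::finite \<Rightarrow> 's \<Rightarrow> real) \<Rightarrow> ('s \<Rightarrow> 's) \<Rightarrow> real" where
  "G c \<phi> = (\<Sum>s\<in>UNIV. c s (\<phi> s) - c s s)"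

lemma sum_pairs: "(\<Sum>(s,a)\<in>(UNIV::('s::finite\<times>'t::finite) set). f s a) = (\<Sum>s\<in>UNIV. \<Sum>a\<in>UNIV. f s a)"
  by (simp add: sum.cartesian_product UNIV_Times_UNIV[symmetric] del: UNIV_Times_UNIV)

lemma Ep_row: fixes \<phi> :: "'s::finite \<Rightarrow> 's" shows "(\<Sum>a\<in>UNIV. Ep \<phi> (s,a)) = (if s \<noteq> \<phi> s then 1 else 0)"
proof (cases "s = \<phi> s")
  case False
  have "(\<Sum>a\<in>UNIV. Ep \<phi> (s,a)) = (\<Sum>a\<in>UNIV. if a = \<phi> s then 1 else 0)"
    by (rule sum.cong) (auto simp: Ep_def False)
  also have "\<dots> = 1" by (subst sum.delta) auto
  finally show ?thesis using False by simp
qed (simp add: Ep_def)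

lemma Ep_col:
  assumes "\<phi> permutes (UNIV::'s::finite set)"
  shows "(\<Sum>a\<in>UNIV. Ep \<phi> (a,s)) = (if s \<noteq> \<phi> s then 1 else 0)"
proof -
  have eq: "\<And>a. (s = \<phi> a) = (a = inv \<phi> s)"
    using permutes_inv_eq[OF assms] by metis
  have "(\<Sum>a\<in>UNIV. Ep \<phi> (a,s)) = (\<Sum>a\<in>UNIV. if a = inv \<phi> s then (if a \<noteq> s then 1 else 0) else 0)"
    by (rule sum.cong) (auto simp: Ep_def eq permutes_inverses[OF assms])
  also have "\<dots> = (if inv \<phi> s \<noteq> s then 1 else 0)" by simp
  also have "(inv \<phi> s \<noteq> s) = (s \<noteq> \<phi> s)"
    using permutes_inv_eq[OF assms] by metis
  finally show ?thesis by simp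
qed

lemma tot_Ep: "tot c (Ep \<phi>) = G c \<phi>"
proof -
  have "tot c (Ep \<phi>) = (\<Sum>s\<in>UNIV. \<Sum>a\<in>UNIV. Ep \<phi> (s,a) * (c s a - c s s))"
    unfolding tot_def by (rule sum_pairs)
  also have "\<dots> = (\<Sum>s\<in>UNIV. c s (\<phi> s) - c s s)"
  proof (rule sum.cong)
    fix s
    show "(\<Sum>a\<in>UNIV. Ep \<phi> (s,a) * (c s a - c s s)) = c s (\<phi> s) - c s s"
    proof (cases "s = \<phi> s")
      case True then show ?thesis by (simp add: Ep_def)
    next
      case False
      have "(\<Sum>a\<in>UNIV. Ep \<phi> (s,a) * (c s a - c s s)) = (\<Sum>a\<in>UNIV. if a = \<phi> s then c s a - c s s else 0)"
        by (rule sum.cong) (auto simp: Ep_def False)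
      then show ?thesis by (simp add: sum.delta)
    qed
  qed simp
  finally show ?thesis by (simp add: G_def)
qed

lemma tot_lin: "(\<And>p. \<nu> p = \<nu>' p + e * Ep \<phi> p) \<Longrightarrow> tot c \<nu> = tot c \<nu>' + e * G c \<phi>"
proof -
  assume h: "\<And>p. \<nu> p = \<nu>' p + e * Ep \<phi> p"
  have "tot c \<nu> = (\<Sum>(s,a)\<in>UNIV. \<nu>' (s,a) * (c s a - c s s) + e * (Ep \<phi> (s,a) * (c s a - c s s)))"
    unfolding tot_def by (rule sum.cong) (auto simp: h algebra_simps)
  also have "\<dots> = tot c \<nu>' + e * tot c (Ep \<phi>)"
    unfolding tot_def by (simp add: sum.distrib sum_distrib_left split_def)
  finally show ?thesis by (simp add: tot_Ep)
qed


lemma circ_step: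
  fixes \<nu> :: "'s::finite \<times> 's \<Rightarrow> real"
  assumes cn: "circ \<nu>" and nz: "\<nu> \<noteq> (\<lambda>_. 0)"
  shows "\<exists>\<phi> e \<nu>'. \<phi> permutes UNIV \<and> \<phi> \<noteq> id \<and> e > 0 \<and> circ \<nu>' \<and>
     card {q. \<nu>' q \<noteq> 0} < card {q. \<nu> q \<noteq> 0} \<and> (\<forall>q. \<nu> q = \<nu>' q + e * Ep \<phi> q)"
proof -
  have nn: "\<And>q. \<nu> q \<ge> 0" and dg: "\<And>s. \<nu> (s,s) = 0"
    and rc: "\<And>s. (\<Sum>a\<in>UNIV. \<nu> (s,a)) = (\<Sum>a\<in>UNIV. \<nu> (a,s))"
    using cn unfolding circ_def by auto
  obtain s0 a0 where "\<nu> (s0,a0) \<noteq> 0" using nz by fastforce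
  then have s0pos: "\<nu> (s0,a0) > 0" using nn[of "(s0,a0)"] by linarith
  define Q where "Q x \<longleftrightarrow> (\<exists>a. \<nu> (x,a) > 0)" for x
  define f where "f x = (SOME a. \<nu> (x,a) > 0)" for x
  have fpos: "\<nu> (x, f x) > 0" if "Q x" for x
    using that unfolding Q_def f_def by (rule someI_ex)
  have fne: "f x \<noteq> x" if "Q x" for x
    using fpos[OF that] dg[of x] by force
  have Qf: "Q (f x)" if "Q x" for x
  proof (rule ccontr)
    assume "\<not> Q (f x)"
    then have "\<And>a. \<nu> (f x, a) \<le> 0" unfolding Q_def by (simp add: not_less)
    then have "(\<Sum>a\<in>UNIV. \<nu> (f x,a)) \<le> 0" by (simp add: sum_nonpos)
    moreover have "\<nu> (x, f x) \<le> (\<Sum>a\<in>UNIV. \<nu> (a, f x))"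
      using member_le_sum[of x UNIV "\<lambda>a. \<nu> (a, f x)"] nn by simp
    ultimately show False using rc[of "f x"] fpos[OF that] by linarith
  qed
  have Q0: "Q s0" unfolding Q_def using s0pos by blast
  have Qn: "Q ((f^^n) s0)" for n
    by (induction n) (auto simp: Q0 Qf)
  define N where "N = card (UNIV::'s set)"
  define g where "g n = (f^^n) s0" for n
  have ninj: "\<not> inj_on g {..N}"
  proof
    assume "inj_on g {..N}"
    then have "card (g ` {..N}) = N + 1" by (simp add: card_image)
    moreover have "card (g ` {..N}) \<le> N" unfolding N_def by (rule card_mono) auto
    ultimately show False by simp
  qed
  obtain i j where ij: "i < j" "g i = g j"
  proof -
    from ninj obtain i j where "i \<noteq> j" "g i = g j" unfolding inj_on_def by blast
    then show ?thesis using that by (cases "i < j") (auto simp: not_less order.order_iff_strict)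
  qed
  define x where "x = (f^^i) s0"
  define p where "p = j - i"
  have p0: "p > 0" using ij unfolding p_def by simp
  have px: "(f^^p) x = x"
  proof -
    have "(f^^p) x = (f^^(p+i)) s0" unfolding x_def by (simp add: funpow_add)
    also have "p + i = j" using ij unfolding p_def by simp
    finally show ?thesis using ij unfolding g_def x_def by simp
  qed
  have Qx: "Q ((f^^k) x)" for k
    unfolding x_def using Qn[of "k+i"] by (simp add: funpow_add)
  define C where "C = (\<lambda>k. (f^^k) x) ` {..<p}"
  have finC: "finite C" unfolding C_def by simp
  have QC: "Q z" if "z \<in> C" for z using that Qx unfolding C_def by auto
  have xC: "x \<in> C" unfolding C_def using p0 by force
  have fC: "f ` C = C"
  proof
    show "f ` C \<subseteq> C"
    proof
      fix w assume "w \<in> f ` C"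
      then obtain k where k: "k < p" "w = f ((f^^k) x)" unfolding C_def by auto
      show "w \<in> C"
      proof (cases "Suc k < p")
        case True then show ?thesis using k unfolding C_def by (auto intro!: image_eqI[of _ _ "Suc k"])
      next
        case False then have "Suc k = p" using k by simp
        then have "w = x" using k px by (metis comp_apply funpow.simps(2))
        then show ?thesis using xC by simp
      qed
    qed
  next
    show "C \<subseteq> f ` C"
    proof
      fix w assume "w \<in> C"
      then obtain k where k: "k < p" "w = (f^^k) x" unfolding C_def by auto
      show "w \<in> f ` C"
      proof (cases k)
        case 0
        have "x = f ((f^^(p-1)) x)" using px p0
          by (metis Suc_diff_1 comp_apply funpow.simps(2))
        moreover have "(f^^(p-1)) x \<in> C" unfolding C_def using p0 by auto
        ultimately show ?thesis using k 0 by auto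
      next
        case (Suc k')
        then have "w = f ((f^^k') x)" using k by simp
        moreover have "(f^^k') x \<in> C" unfolding C_def using k Suc by auto
        ultimately show ?thesis by auto
      qed
    qed
  qed
  have injC: "inj_on f C" using finC fC by (intro eq_card_imp_inj_on) auto
  define \<phi> where "\<phi> z = (if z \<in> C then f z else z)" for z
  have injp: "inj \<phi>"
  proof (rule injI)
    fix z1 z2 assume h: "\<phi> z1 = \<phi> z2"
    show "z1 = z2"
    proof (cases "z1 \<in> C"; cases "z2 \<in> C")
      assume "z1 \<in> C" "z2 \<in> C" then show ?thesis using h injC unfolding \<phi>_def inj_on_def by auto
    next
      assume "z1 \<in> C" "z2 \<notin> C" then show ?thesis using h fC unfolding \<phi>_def by force
    next
      assume "z1 \<notin> C" "z2 \<in> C" then show ?thesis using h fC unfolding \<phi>_def by force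
    next
      assume "z1 \<notin> C" "z2 \<notin> C" then show ?thesis using h unfolding \<phi>_def by auto
    qed
  qed
  have perm: "\<phi> permutes UNIV"
    using injp finite_UNIV_inj_surj[of \<phi>] by (intro bij_imp_permutes) (auto simp: bij_def)
  have mv: "(\<phi> z \<noteq> z) = (z \<in> C)" for z
    using fne QC unfolding \<phi>_def by auto
  have posC: "\<nu> (z, \<phi> z) > 0" if "z \<in> C" for z
    using fpos QC that unfolding \<phi>_def by auto
  have nid: "\<phi> \<noteq> id" using mv[of x] xC by auto
  define e where "e = Min ((\<lambda>z. \<nu> (z, \<phi> z)) ` C)"
  have "e \<in> (\<lambda>z. \<nu> (z, \<phi> z)) ` C" unfolding e_def using finC xC by (intro Min_in) auto
  then obtain z0 where z0: "z0 \<in> C" "\<nu> (z0, \<phi> z0) = e" by auto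
  have e0: "e > 0" using posC z0 by auto
  have ele: "e \<le> \<nu> (z, \<phi> z)" if "z \<in> C" for z
    unfolding e_def using finC that by (intro Min_le) auto
  define \<nu>' where "\<nu>' q = \<nu> q - e * Ep \<phi> q" for q
  have Ep1: "\<nu> q \<ge> e" if "Ep \<phi> q \<noteq> 0" for q
  proof -
    obtain s a where q: "q = (s,a)" by force
    have "s \<noteq> \<phi> s" "a = \<phi> s" using that q unfolding Ep_def by (auto split: if_splits)
    then show ?thesis using ele mv[of s] q by (metis)
  qed
  have nn': "\<nu>' q \<ge> 0" for q
  proof (cases "Ep \<phi> q = 0")
    case True then show ?thesis using nn unfolding \<nu>'_def by simp
  next
    case False
    then have "Ep \<phi> q = 1" unfolding Ep_def by (auto split: prod.splits if_splits)
    then show ?thesis using Ep1[OF False] unfolding \<nu>'_def by simp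
  qed
  have dg': "\<nu>' (s,s) = 0" for s using dg unfolding \<nu>'_def Ep_def by simp
  have rc': "(\<Sum>a\<in>UNIV. \<nu>' (s,a)) = (\<Sum>a\<in>UNIV. \<nu>' (a,s))" for s
    unfolding \<nu>'_def using rc[of s] Ep_row[of \<phi> s] Ep_col[OF perm, of s]
    by (simp add: sum_subtractf sum_distrib_left[symmetric])
  have cn': "circ \<nu>'" unfolding circ_def using nn' dg' rc' by blast
  have sub: "{q. \<nu>' q \<noteq> 0} \<subset> {q. \<nu> q \<noteq> 0}"
  proof
    show "{q. \<nu>' q \<noteq> 0} \<subseteq> {q. \<nu> q \<noteq> 0}"
      using Ep1 e0 unfolding \<nu>'_def by force
    have "z0 \<noteq> \<phi> z0" using mv[of z0] z0 by metis
    then have "Ep \<phi> (z0, \<phi> z0) = 1" unfolding Ep_def by auto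
    then have "\<nu>' (z0, \<phi> z0) = 0" "\<nu> (z0, \<phi> z0) \<noteq> 0" using z0 e0 unfolding \<nu>'_def by auto
    then show "{q. \<nu>' q \<noteq> 0} \<noteq> {q. \<nu> q \<noteq> 0}" by blast
  qed
  have "card {q. \<nu>' q \<noteq> 0} < card {q. \<nu> q \<noteq> 0}"
    by (rule psubset_card_mono[OF _ sub]) simp
  moreover have "\<forall>q. \<nu> q = \<nu>' q + e * Ep \<phi> q" unfolding \<nu>'_def by simp
  ultimately show ?thesis using perm nid e0 cn' by blast
qed


lemma tot_zero: "tot c (\<lambda>_. 0) = 0" by (simp add: tot_def)

lemma tot_weak:
  fixes c :: "'s::finite \<Rightarrow> 's \<Rightarrow> real"
  assumes H: "\<forall>\<phi>. \<phi> permutes UNIV \<longrightarrow> G c \<phi> \<le> 0"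
  shows "circ \<nu> \<Longrightarrow> tot c \<nu> \<le> 0"
proof (induction \<nu> rule: measure_induct_rule[where f = "\<lambda>\<nu>. card {q. \<nu> q \<noteq> 0}"])
  case (less \<nu>)
  show ?case
  proof (cases "\<nu> = (\<lambda>_. 0)")
    case True then show ?thesis by (simp add: tot_zero)
  next
    case False
    then obtain \<phi> e \<nu>' where o: "\<phi> permutes UNIV" "e > 0" "circ \<nu>'"
      "card {q. \<nu>' q \<noteq> 0} < card {q. \<nu> q \<noteq> 0}" "\<forall>q. \<nu> q = \<nu>' q + e * Ep \<phi> q"
      using circ_step[OF less.prems] by blast
    have "tot c \<nu> = tot c \<nu>' + e * G c \<phi>" using o(5) by (intro tot_lin) auto
    moreover have "tot c \<nu>' \<le> 0" using less.IH[OF o(4) o(3)] .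
    moreover have "e * G c \<phi> \<le> 0" using H o(1,2) by (simp add: mult_nonneg_nonpos)
    ultimately show ?thesis by linarith
  qed
qed

lemma tot_strict:
  fixes c :: "'s::finite \<Rightarrow> 's \<Rightarrow> real"
  assumes H: "\<forall>\<phi>. \<phi> permutes UNIV \<and> \<phi> \<noteq> id \<longrightarrow> G c \<phi> < 0"
    and cn: "circ \<nu>" and nz: "\<nu> \<noteq> (\<lambda>_. 0)"
  shows "tot c \<nu> < 0"
proof -
  have H': "\<forall>\<phi>. \<phi> permutes UNIV \<longrightarrow> G c \<phi> \<le> 0"
  proof (intro allI impI)
    fix \<phi> :: "'s \<Rightarrow> 's" assume "\<phi> permutes UNIV"
    then show "G c \<phi> \<le> 0" using H by (cases "\<phi> = id") (auto simp: G_def intro: less_imp_le)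
  qed
  obtain \<phi> e \<nu>' where o: "\<phi> permutes UNIV" "\<phi> \<noteq> id" "e > 0" "circ \<nu>'"
      "\<forall>q. \<nu> q = \<nu>' q + e * Ep \<phi> q"
      using circ_step[OF cn nz] by blast
  have "tot c \<nu> = tot c \<nu>' + e * G c \<phi>" using o(5) by (intro tot_lin) auto
  moreover have "tot c \<nu>' \<le> 0" using tot_weak[OF H' o(4)] .
  moreover have "e * G c \<phi> < 0" using H o(1,2,3) by (simp add: mult_pos_neg)
  ultimately show ?thesis by linarith
qed

lemma sum_off1: fixes h :: "'a::finite \<Rightarrow> real" shows "(\<Sum>a\<in>(UNIV::'a::finite set). if s = a then 0 else h a) = (\<Sum>a\<in>UNIV. h a) - h s"
proof -
  have "(\<Sum>a\<in>UNIV. h a) = (\<Sum>a\<in>UNIV. (if s = a then 0 else h a) + (if s = a then h a else 0))"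
    by (rule sum.cong) auto
  then have "(\<Sum>a\<in>UNIV. h a) = (\<Sum>a\<in>UNIV. if s = a then 0 else h a) + h s"
    by (simp add: sum.distrib sum.delta)
  then show ?thesis by linarith
qed

lemma sum_off2: fixes h :: "'a::finite \<Rightarrow> real" shows "(\<Sum>a\<in>(UNIV::'a::finite set). if a = s then 0 else h a) = (\<Sum>a\<in>UNIV. h a) - h s"
  using sum_off1[of s h] by (simp add: eq_commute)

lemma U1_diff:
  fixes \<mu> :: "'s::finite \<times> 's \<Rightarrow> real" and u :: "'s \<Rightarrow> 'b::finite \<Rightarrow> real"
  assumes row: "\<forall>s. (\<Sum>a\<in>UNIV. \<mu> (s,a)) = m s"
  shows "U1 u \<mu> y - U1 u (mu0 m) y =
    (\<Sum>(s,a)\<in>UNIV. \<mu> (s,a) * (u_ext u s (y a) - u_ext u s (y s)))"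
proof -
  have a: "U1 u \<mu> y = (\<Sum>s\<in>UNIV. \<Sum>a\<in>UNIV. \<mu> (s,a) * u_ext u s (y a))"
    unfolding U1_def by (rule sum_pairs)
  have b: "U1 u (mu0 m) y = (\<Sum>s\<in>UNIV. m s * u_ext u s (y s))"
  proof -
    have "U1 u (mu0 m) y = (\<Sum>s\<in>UNIV. \<Sum>a\<in>UNIV. mu0 m (s,a) * u_ext u s (y a))"
      unfolding U1_def by (rule sum_pairs)
    also have "\<dots> = (\<Sum>s\<in>UNIV. m s * u_ext u s (y s))"
    proof (rule sum.cong)
      fix s
      have "(\<Sum>a\<in>UNIV. mu0 m (s,a) * u_ext u s (y a)) = (\<Sum>a\<in>UNIV. if s = a then m s * u_ext u s (y s) else 0)"
        by (rule sum.cong) (auto simp: mu0_def)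
      then show "(\<Sum>a\<in>UNIV. mu0 m (s,a) * u_ext u s (y a)) = m s * u_ext u s (y s)"
        by (simp add: sum.delta)
    qed simp
    finally show ?thesis .
  qed
  have c: "(\<Sum>(s,a)\<in>UNIV. \<mu> (s,a) * (u_ext u s (y a) - u_ext u s (y s)))
      = (\<Sum>s\<in>UNIV. \<Sum>a\<in>UNIV. \<mu> (s,a) * u_ext u s (y a)) - (\<Sum>s\<in>UNIV. (\<Sum>a\<in>UNIV. \<mu> (s,a)) * u_ext u s (y s))"
    by (subst sum_pairs) (simp add: right_diff_distrib sum_subtractf sum_distrib_right)
  show ?thesis using a b c row by simp
qed

definition off :: "('s \<times> 's \<Rightarrow> real) \<Rightarrow> 's \<times> 's \<Rightarrow> real" where
  "off \<mu> = (\<lambda>(s,a). if s = a then 0 else \<mu> (s,a))"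

lemma coupling_off:
  fixes \<mu> :: "'s::finite \<times> 's \<Rightarrow> real" and u :: "'s \<Rightarrow> 'b::finite \<Rightarrow> real"
  assumes "\<mu> \<in> couplings m"
  shows "circ (off \<mu>)"
    and "tot (\<lambda>s a. u_ext u s (y a)) (off \<mu>) = U1 u \<mu> y - U1 u (mu0 m) y"
    and "\<mu> \<noteq> mu0 m \<Longrightarrow> off \<mu> \<noteq> (\<lambda>_. 0)"
proof -
  have nn: "\<And>q. \<mu> q \<ge> 0" and row: "\<forall>s. (\<Sum>a\<in>UNIV. \<mu> (s,a)) = m s"
    and col: "\<forall>a. (\<Sum>s\<in>UNIV. \<mu> (s,a)) = m a"
    using assms unfolding couplings_def is_distr_def by auto
  have r: "(\<Sum>a\<in>UNIV. off \<mu> (s,a)) = m s - \<mu> (s,s)" for s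
    using row sum_off1[of s "\<lambda>a. \<mu> (s,a)"] by (simp add: off_def)
  have cc: "(\<Sum>a\<in>UNIV. off \<mu> (a,s)) = m s - \<mu> (s,s)" for s
    using col sum_off2[of s "\<lambda>a. \<mu> (a,s)"] by (simp add: off_def)
  show "circ (off \<mu>)" unfolding circ_def using nn r cc by (auto simp: off_def)
  have "tot (\<lambda>s a. u_ext u s (y a)) (off \<mu>) = (\<Sum>(s,a)\<in>UNIV. \<mu> (s,a) * (u_ext u s (y a) - u_ext u s (y s)))"
    unfolding tot_def by (rule sum.cong) (auto simp: off_def)
  then show "tot (\<lambda>s a. u_ext u s (y a)) (off \<mu>) = U1 u \<mu> y - U1 u (mu0 m) y"
    using U1_diff[OF row, of u y] by linarith
  show "off \<mu> \<noteq> (\<lambda>_. 0)" if "\<mu> \<noteq> mu0 m"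
  proof
    assume z: "off \<mu> = (\<lambda>_. 0)"
    have "\<mu> q = mu0 m q" for q
    proof -
      obtain s a where q: "q = (s,a)" by force
      show ?thesis
      proof (cases "s = a")
        case True
        have "m s - \<mu> (s,s) = 0" using r[of s] z by simp
        then show ?thesis using q True by (simp add: mu0_def)
      next
        case False
        then show ?thesis using q fun_cong[OF z, of q] by (simp add: off_def mu0_def)
      qed
    qed
    then show False using that by auto
  qed
qed


lemma perm_coupling:
  fixes m :: "'s::finite \<Rightarrow> real" and u :: "'s \<Rightarrow> 'b::finite \<Rightarrow> real" and \<phi> :: "'s \<Rightarrow> 's"
  assumes md: "is_distr m" and mp: "\<forall>s. m s > 0" and perm: "\<phi> permutes UNIV"
  shows "\<exists>\<mu>\<in>couplings m. \<exists>e>0. U1 u \<mu> y - U1 u (mu0 m) y = e * G (\<lambda>s a. u_ext u s (y a)) \<phi>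
            \<and> (\<phi> \<noteq> id \<longrightarrow> \<mu> \<noteq> mu0 m)"
proof -
  define e where "e = Min (range m)"
  have "e \<in> range m" unfolding e_def by (intro Min_in) auto
  then have e0: "e > 0" using mp by auto
  have ele: "e \<le> m s" for s unfolding e_def by (intro Min_le) auto
  define D where "D = (\<lambda>(s,a). if s = a \<and> s \<noteq> \<phi> s then 1 else (0::real))"
  define \<mu> where "\<mu> q = mu0 m q - e * D q + e * Ep \<phi> q" for q
  have Drow: "(\<Sum>a\<in>UNIV. D (s,a)) = (if s \<noteq> \<phi> s then 1 else 0)" for s
  proof -
    have "(\<Sum>a\<in>UNIV. D (s,a)) = (\<Sum>a\<in>UNIV. if s = a then (if s \<noteq> \<phi> s then 1 else 0) else 0)"
      by (rule sum.cong) (auto simp: D_def)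
    then show ?thesis by (simp add: sum.delta)
  qed
  have Dcol: "(\<Sum>a\<in>UNIV. D (a,s)) = (if s \<noteq> \<phi> s then 1 else 0)" for s
  proof -
    have "(\<Sum>a\<in>UNIV. D (a,s)) = (\<Sum>a\<in>UNIV. if a = s then (if s \<noteq> \<phi> s then 1 else 0) else 0)"
      by (rule sum.cong) (auto simp: D_def)
    then show ?thesis by (simp add: sum.delta')
  qed
  have Mrow: "(\<Sum>a\<in>UNIV. mu0 m (s,a)) = m s" for s
  proof -
    have "(\<Sum>a\<in>UNIV. mu0 m (s,a)) = (\<Sum>a\<in>UNIV. if s = a then m s else 0)"
      by (rule sum.cong) (auto simp: mu0_def)
    then show ?thesis by (simp add: sum.delta)
  qed
  have Mcol: "(\<Sum>a\<in>UNIV. mu0 m (a,s)) = m s" for s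
  proof -
    have "(\<Sum>a\<in>UNIV. mu0 m (a,s)) = (\<Sum>a\<in>UNIV. if a = s then m s else 0)"
      by (rule sum.cong) (auto simp: mu0_def)
    then show ?thesis by (simp add: sum.delta')
  qed
  have row: "(\<Sum>a\<in>UNIV. \<mu> (s,a)) = m s" for s
    unfolding \<mu>_def using Mrow[of s] Drow[of s] Ep_row[of \<phi> s]
    by (simp add: sum.distrib sum_subtractf sum_distrib_left[symmetric])
  have col: "(\<Sum>a\<in>UNIV. \<mu> (a,s)) = m s" for s
    unfolding \<mu>_def using Mcol[of s] Dcol[of s] Ep_col[OF perm, of s]
    by (simp add: sum.distrib sum_subtractf sum_distrib_left[symmetric])
  have nn: "\<mu> q \<ge> 0" for q
  proof -
    obtain s a where q: "q = (s,a)" by force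
    show ?thesis
    proof (cases "s = a")
      case True
      then show ?thesis using q ele[of s] e0 by (auto simp: \<mu>_def mu0_def D_def Ep_def)
    next
      case False
      then show ?thesis using q e0 by (auto simp: \<mu>_def mu0_def D_def Ep_def)
    qed
  qed
  have tot1: "(\<Sum>q\<in>UNIV. \<mu> q) = 1"
  proof -
    have "(\<Sum>q\<in>UNIV. \<mu> q) = (\<Sum>s\<in>UNIV. \<Sum>a\<in>UNIV. \<mu> (s,a))"
      using sum_pairs[of "\<lambda>s a. \<mu> (s,a)"] by simp
    also have "\<dots> = (\<Sum>s\<in>UNIV. m s)" using row by simp
    finally show ?thesis using md unfolding is_distr_def by simp
  qed
  have cp: "\<mu> \<in> couplings m"
    unfolding couplings_def is_distr_def using nn tot1 row col by auto
  have "U1 u \<mu> y - U1 u (mu0 m) y = (\<Sum>(s,a)\<in>UNIV. \<mu> (s,a) * (u_ext u s (y a) - u_ext u s (y s)))"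
    using U1_diff[of \<mu> m u y] row by simp
  also have "\<dots> = (\<Sum>(s,a)\<in>UNIV. e * (Ep \<phi> (s,a) * (u_ext u s (y a) - u_ext u s (y s))))"
    by (rule sum.cong) (auto simp: \<mu>_def mu0_def D_def Ep_def)
  also have "\<dots> = e * tot (\<lambda>s a. u_ext u s (y a)) (Ep \<phi>)"
    unfolding tot_def by (simp add: sum_distrib_left split_def)
  finally have U: "U1 u \<mu> y - U1 u (mu0 m) y = e * G (\<lambda>s a. u_ext u s (y a)) \<phi>"
    by (simp add: tot_Ep)
  have "\<mu> \<noteq> mu0 m" if "\<phi> \<noteq> id"
  proof
    from that obtain s where s: "\<phi> s \<noteq> s" by (auto simp: fun_eq_iff)
    assume "\<mu> = mu0 m"
    then have "\<mu> (s,s) = m s" by (simp add: mu0_def)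
    then show False using s e0 by (auto simp: \<mu>_def mu0_def D_def Ep_def)
  qed
  then show ?thesis using cp e0 U by blast
qed

lemma G_eq: "G (\<lambda>s a. u_ext u s (y a)) \<phi> = (\<Sum>s\<in>UNIV. u_ext u s (y (\<phi> s))) - (\<Sum>s\<in>UNIV. u_ext u s (y s))"
  unfolding G_def by (simp add: sum_subtractf)

theorem lemma1:
  fixes u :: "'s::finite \<Rightarrow> 'b::finite \<Rightarrow> real"
    and m :: "'s \<Rightarrow> real"
    and y :: "'s \<Rightarrow> 'b \<Rightarrow> real"
  assumes m_distr: "is_distr m"
    and m_full: "\<forall>s. m s > 0"
    and y_distr: "\<forall>a. is_distr (y a)"
  shows "((\<forall>\<mu>\<in>couplings m. U1 u (mu0 m) y \<ge> U1 u \<mu> y) \<longleftrightarrow>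
           (\<forall>\<phi>. \<phi> permutes (UNIV :: 's set) \<longrightarrow>
              (\<Sum>s\<in>UNIV. u_ext u s (y s)) \<ge> (\<Sum>s\<in>UNIV. u_ext u s (y (\<phi> s)))))
       \<and> ((\<forall>\<mu>\<in>couplings m. \<mu> \<noteq> mu0 m \<longrightarrow> U1 u (mu0 m) y > U1 u \<mu> y) \<longleftrightarrow>
           (\<forall>\<phi>. \<phi> permutes (UNIV :: 's set) \<and> \<phi> \<noteq> id \<longrightarrow>
              (\<Sum>s\<in>UNIV. u_ext u s (y s)) > (\<Sum>s\<in>UNIV. u_ext u s (y (\<phi> s)))))"
proof -
  define c where "c = (\<lambda>s a. u_ext u s (y a))"
  have Gc: "G c \<phi> = (\<Sum>s\<in>UNIV. u_ext u s (y (\<phi> s))) - (\<Sum>s\<in>UNIV. u_ext u s (y s))" for \<phi>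
    unfolding c_def by (rule G_eq)
  have A: "(\<forall>\<mu>\<in>couplings m. U1 u (mu0 m) y \<ge> U1 u \<mu> y) \<longleftrightarrow> (\<forall>\<phi>. \<phi> permutes (UNIV :: 's set) \<longrightarrow> G c \<phi> \<le> 0)"
  proof
    assume h: "\<forall>\<mu>\<in>couplings m. U1 u (mu0 m) y \<ge> U1 u \<mu> y"
    show "\<forall>\<phi>. \<phi> permutes (UNIV :: 's set) \<longrightarrow> G c \<phi> \<le> 0"
    proof (intro allI impI)
      fix \<phi> :: "'s \<Rightarrow> 's" assume p: "\<phi> permutes UNIV"
      obtain \<mu> e where "\<mu> \<in> couplings m" "e > 0" "U1 u \<mu> y - U1 u (mu0 m) y = e * G c \<phi>"
        using perm_coupling[OF m_distr m_full p, of u y] unfolding c_def by blast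
      then have "e * G c \<phi> \<le> 0" "e > 0" using h by auto
      then show "G c \<phi> \<le> 0" by (simp add: mult_le_0_iff)
    qed
  next
    assume h: "\<forall>\<phi>. \<phi> permutes (UNIV :: 's set) \<longrightarrow> G c \<phi> \<le> 0"
    show "\<forall>\<mu>\<in>couplings m. U1 u (mu0 m) y \<ge> U1 u \<mu> y"
    proof
      fix \<mu> assume "\<mu> \<in> couplings m"
      have "circ (off \<mu>)" "tot c (off \<mu>) = U1 u \<mu> y - U1 u (mu0 m) y"
        using coupling_off(1,2)[OF \<open>\<mu> \<in> couplings m\<close>] unfolding c_def by blast+
      then show "U1 u (mu0 m) y \<ge> U1 u \<mu> y" using tot_weak[OF h] by fastforce
    qed
  qed
  have B: "(\<forall>\<mu>\<in>couplings m. \<mu> \<noteq> mu0 m \<longrightarrow> U1 u (mu0 m) y > U1 u \<mu> y) \<longleftrightarrow>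
       (\<forall>\<phi>. \<phi> permutes (UNIV :: 's set) \<and> \<phi> \<noteq> id \<longrightarrow> G c \<phi> < 0)"
  proof
    assume h: "\<forall>\<mu>\<in>couplings m. \<mu> \<noteq> mu0 m \<longrightarrow> U1 u (mu0 m) y > U1 u \<mu> y"
    show "\<forall>\<phi>. \<phi> permutes (UNIV :: 's set) \<and> \<phi> \<noteq> id \<longrightarrow> G c \<phi> < 0"
    proof (intro allI impI)
      fix \<phi> :: "'s \<Rightarrow> 's" assume p: "\<phi> permutes UNIV \<and> \<phi> \<noteq> id"
      obtain \<mu> e where "\<mu> \<in> couplings m" "e > 0" "U1 u \<mu> y - U1 u (mu0 m) y = e * G c \<phi>"
         "\<mu> \<noteq> mu0 m"
        using perm_coupling[OF m_distr m_full conjunct1[OF p], of u y] p unfolding c_def by blast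
      then have "e * G c \<phi> < 0" "e > 0" using h by auto
      then show "G c \<phi> < 0" by (simp add: mult_less_0_iff)
    qed
  next
    assume h: "\<forall>\<phi>. \<phi> permutes (UNIV :: 's set) \<and> \<phi> \<noteq> id \<longrightarrow> G c \<phi> < 0"
    show "\<forall>\<mu>\<in>couplings m. \<mu> \<noteq> mu0 m \<longrightarrow> U1 u (mu0 m) y > U1 u \<mu> y"
    proof (intro ballI impI)
      fix \<mu> assume "\<mu> \<in> couplings m" "\<mu> \<noteq> mu0 m"
      have "circ (off \<mu>)" "tot c (off \<mu>) = U1 u \<mu> y - U1 u (mu0 m) y" "off \<mu> \<noteq> (\<lambda>_. 0)"
        using coupling_off[OF \<open>\<mu> \<in> couplings m\<close>] \<open>\<mu> \<noteq> mu0 m\<close> unfolding c_def by blast+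
      then show "U1 u (mu0 m) y > U1 u \<mu> y" using tot_strict[OF h] by fastforce
    qed
  qed
  show ?thesis unfolding A B Gc by auto
qed

end
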